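(* Assume the standing hypotheses (P) described in the context and let $\epsilon>0$. Then almost surely $$\sup_{\phi\in\mathcal H^{pot}(\epsilon)}\big|\hat P^{(\beta)}_n(\phi)-P^{(\beta)}(\phi)\big|\longrightarrow0\quad\text{as }n\to\infty.$$
   Context: Let $d\in\mathbb N$; $\lambda$ is the restriction of Lebesgue measure to $[0,1]^d$, $G_{\#}\lambda$ the pushforward. $\mu^*$ is a probability measure on $[0,1]^d$ with Lebesgue density $p^*$, $p^*>0$ on $[0,1]^d$, $p^*=0$ outside. Neural networks with architecture $(l_0,\dots,l_L)$ and activation $\sigma$ realize $x_0\mapsto W_Lx_{L-1}+B_L$, $x_k=\sigma(W_kx_{k-1}+B_k)$; ReCU: $\sigma(x)=\max\{x,0\}^3$. $C^{k,\alpha}$ are Hölder spaces on $[0,1]^d$; $A\ge B$ means $A-B$ positive semidefinite; $d_{JS}$ is the Jensen–Shannon divergence. Hypotheses (P): $p^*\in C^{1,\alpha}([0,1]^d,\mathbb R)$ for some $\alpha\in(0,1)$; $\phi^*\in C^{3,\alpha}([0,1]^d,\mathbb R)$ is the Brenier potential with $\mu^*=(\nabla\phi^* )_{\#}\lambda$; $M\in(1,\infty)$ with $\frac1M\operatorname{Id}\le\operatorname{Hess}\phi^*\le M\operatorname{Id}$ on $[0,1]^d$, and $\beta:=1/M$. For each $\epsilon>0$, $\phi_\epsilon$ is a ReCU network with $\frac1{2M}\operatorname{Id}\le\operatorname{Hess}\phi_\epsilon\le2M\operatorname{Id}$ on $[0,1]^d$ and $d_{JS}(\mu^*,(\nabla\phi_\epsilon)_{\#}\lambda)\le\epsilon$,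 $\mathcal A^\phi(\epsilon)$ is its architecture, $H(\epsilon)=\|\phi_\epsilon\|_{C^{2,1}}$, $\tilde H(\epsilon)\ge H(\epsilon)$ is fixed, and $\mathcal H^{pot}(\epsilon)$ is the set of all ReCU networks $\phi\colon[0,1]^d\to\mathbb R$ with architecture $\mathcal A^\phi(\epsilon)$ and $\|\phi\|_{C^{2,1}([0,1]^d)}\le\tilde H(\epsilon)$. For $\kappa>0$: $P^{(\kappa)}(\phi)=\int_{([0,1]^d)^2}\mathrm{ReLU}\big(\phi(\frac{u+u'}2)-\frac{\phi(u)+\phi(u')}2+\frac\kappa8\|u-u'\|^2\big)du\,du'$ with $\mathrm{ReLU}(x)=\max\{x,0\}$. Let $m\colon\mathbb N\to\mathbb N$ be increasing with $m(n)\to\infty$, and let $U_1,U_2,\dots,U'_1,U'_2,\dots$ be independent random variables uniformly distributed on $[0,1]^d$; the empirical penalty is $\hat P^{(\kappa)}_n(\phi)=\frac1{m(n)}\sum_{j=1}^{m(n)}\mathrm{ReLU}\big(\phi(\frac{U_j+U'_j}2)-\frac{\phi(U_j)+\phi(U'_j)}2+\frac\kappa8\|U_j-U'_j\|^2\big)$. *)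

theory Defs
  imports "HOL-Analysis.Analysis" "HOL-Probability.Probability"
begin

abbreviation ucube :: "(real^'d) set" where
  "ucube \<equiv> cbox 0 One"

abbreviation ucube_int :: "(real^'d) set" where
  "ucube_int \<equiv> box 0 One"

fun pderivs :: "'d::finite list \<Rightarrow> (real^'d \<Rightarrow> real) \<Rightarrow> (real^'d \<Rightarrow> real)" where
  "pderivs [] f = f"
| "pderivs (i # is) f = (\<lambda>x. frechet_derivative (pderivs is f) (at x) (axis i 1))"

text \<open>Derivatives are taken in the open cube (values on the boundary are determined by continuity);
  the norm is infinite if f is not continuous on the closed cube or not k times differentiable
  in the open cube.\<close>
definition holder_norm :: "nat \<Rightarrow> real \<Rightarrow> (real^'d::finite \<Rightarrow> real) \<Rightarrow> ereal" where
  "holder_norm k \<alpha> f =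
    (if continuous_on ucube f \<and>
        (\<forall>ls::'d list. length ls < k \<longrightarrow> (\<forall>x\<in>ucube_int. pderivs ls f differentiable (at x)))
     then
       (SUP ls\<in>{ls::'d list. length ls \<le> k}.
          SUP x\<in>(if ls = [] then ucube else ucube_int). ereal \<bar>pderivs ls f x\<bar>)
       + (SUP ls\<in>{ls::'d list. length ls = k}.
          SUP p\<in>{p. fst p \<in> (if k = 0 then ucube else ucube_int) \<and>
                     snd p \<in> (if k = 0 then ucube else ucube_int) \<and> fst p \<noteq> snd p}.
            ereal (\<bar>pderivs ls f (fst p) - pderivs ls f (snd p)\<bar> / (dist (fst p) (snd p)) powr \<alpha>))
     else \<infinity>)"

definition holder_space :: "nat \<Rightarrow> real \<Rightarrow> (real^'d::finite \<Rightarrow> real) set" where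
  "holder_space k \<alpha> = {f. holder_norm k \<alpha> f < \<infinity>}"

definition hess_form :: "(real^'d::finite \<Rightarrow> real) \<Rightarrow> real^'d \<Rightarrow> real^'d \<Rightarrow> real" where
  "hess_form f x v = (\<Sum>i\<in>UNIV. \<Sum>j\<in>UNIV. v$i * pderivs [i, j] f x * v$j)"

text \<open>c1 Id \<le> Hess f \<le> c2 Id on [0,1]^d (checked in the open cube; equivalent on the closed cube
  by continuity of the Hessian), with A \<ge> B meaning A - B positive semidefinite.\<close>
definition hess_between :: "real \<Rightarrow> real \<Rightarrow> (real^'d::finite \<Rightarrow> real) \<Rightarrow> bool" where
  "hess_between c1 c2 f \<longleftrightarrow>
     (\<forall>x\<in>ucube_int. \<forall>v. c1 * (norm v)\<^sup>2 \<le> hess_form f x v \<and> hess_form f x v \<le> c2 * (norm v)\<^sup>2)"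

definition grad :: "(real^'d::finite \<Rightarrow> real) \<Rightarrow> real^'d \<Rightarrow> real^'d" where
  "grad f x = (\<chi> i. pderivs [i] f x)"

definition pushfwd :: "(real^'d::finite \<Rightarrow> real^'d) \<Rightarrow> (real^'d) measure" where
  "pushfwd G = distr (lebesgue_on ucube) borel G"

definition mixture :: "'a measure \<Rightarrow> 'a measure \<Rightarrow> 'a measure" where
  "mixture P Q = measure_of (space P) (sets P) (\<lambda>A. (emeasure P A + emeasure Q A) / 2)"

text \<open>Jensen-Shannon divergence (natural logarithm):
  d_JS(P,Q) = KL(P||M)/2 + KL(Q||M)/2 with M = (P+Q)/2.
  Note KL_divergence b M N = KL(N || M).\<close>
definition JS_div :: "'a measure \<Rightarrow> 'a measure \<Rightarrow> real" where
  "JS_div P Q = (KL_divergence (exp 1) (mixture P Q) P + KL_divergence (exp 1) (mixture P Q) Q) / 2"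

definition recu :: "real \<Rightarrow> real" where
  "recu x = (max x 0) ^ 3"

definition relu :: "real \<Rightarrow> real" where
  "relu x = max x 0"

text \<open>Vectors of R^l are represented as nat \<Rightarrow> real (entries with index \<ge> l are 0);
  W :: nat \<Rightarrow> nat \<Rightarrow> real is an l_out x l_in matrix, B :: nat \<Rightarrow> real a bias vector.\<close>
definition affine_layer ::
  "nat \<Rightarrow> nat \<Rightarrow> (nat \<Rightarrow> nat \<Rightarrow> real) \<Rightarrow> (nat \<Rightarrow> real) \<Rightarrow> (nat \<Rightarrow> real) \<Rightarrow> (nat \<Rightarrow> real)" where
  "affine_layer n_in n_out W B x = (\<lambda>i. if i < n_out then (\<Sum>j<n_in. W i j * x j) + B i else 0)"

fun net_eval :: "(real \<Rightarrow> real) \<Rightarrow> nat list \<Rightarrow> ((nat \<Rightarrow> nat \<Rightarrow> real) \<times> (nat \<Rightarrow> real)) list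
                  \<Rightarrow> (nat \<Rightarrow> real) \<Rightarrow> (nat \<Rightarrow> real)" where
  "net_eval \<sigma> (l0 # l1 # ls) ((W, B) # ps) x =
     (let y = affine_layer l0 l1 W B x in
      if ls = [] then y else net_eval \<sigma> (l1 # ls) ps (\<lambda>i. if i < l1 then \<sigma> (y i) else 0))"
| "net_eval \<sigma> _ _ x = x"

text \<open>A fixed enumeration of the coordinates of R^d (the class of networks is invariant under
  the choice, since first-layer weights are arbitrary).\<close>
definition coord_enum :: "nat \<Rightarrow> 'd::finite" where
  "coord_enum = (SOME f. bij_betw f {..<CARD('d)} (UNIV :: 'd set))"

definition vec_to_list_fun :: "real^'d::finite \<Rightarrow> (nat \<Rightarrow> real)" where
  "vec_to_list_fun x = (\<lambda>i. if i < CARD('d) then x $ coord_enum i else 0)"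

definition is_recu_net :: "nat list \<Rightarrow> (real^'d::finite \<Rightarrow> real) \<Rightarrow> bool" where
  "is_recu_net A \<phi> \<longleftrightarrow> 2 \<le> length A \<and> hd A = CARD('d) \<and> last A = 1 \<and>
     (\<exists>ps. length ps = length A - 1 \<and> (\<forall>x. \<phi> x = net_eval recu A ps (vec_to_list_fun x) 0))"

definition Hpot :: "nat list \<Rightarrow> real \<Rightarrow> (real^'d::finite \<Rightarrow> real) set" where
  "Hpot A H = {\<phi>. is_recu_net A \<phi> \<and> holder_norm 2 1 \<phi> \<le> ereal H}"

definition penalty_integrand :: "real \<Rightarrow> (real^'d::finite \<Rightarrow> real) \<Rightarrow> real^'d \<Rightarrow> real^'d \<Rightarrow> real" where
  "penalty_integrand \<kappa> \<phi> u u' =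
     relu (\<phi> ((1/2) *\<^sub>R (u + u')) - (\<phi> u + \<phi> u') / 2 + \<kappa> / 8 * (norm (u - u'))\<^sup>2)"

definition penalty :: "real \<Rightarrow> (real^'d::finite \<Rightarrow> real) \<Rightarrow> real" where
  "penalty \<kappa> \<phi> = integral\<^sup>L (lebesgue_on (ucube \<times> ucube)) (\<lambda>p. penalty_integrand \<kappa> \<phi> (fst p) (snd p))"

definition emp_penalty ::
  "real \<Rightarrow> (nat \<Rightarrow> nat) \<Rightarrow> (nat \<Rightarrow> 'w \<Rightarrow> real^'d::finite) \<Rightarrow> (nat \<Rightarrow> 'w \<Rightarrow> real^'d)
   \<Rightarrow> nat \<Rightarrow> 'w \<Rightarrow> (real^'d \<Rightarrow> real) \<Rightarrow> real" where
  "emp_penalty \<kappa> m U U' n \<omega> \<phi> =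
     (1 / real (m n)) * (\<Sum>j\<in>{1..m n}. penalty_integrand \<kappa> \<phi> (U j \<omega>) (U' j \<omega>))"

end

theory Submission
  imports Defs
begin

lemma One_cart [simp]: "(One::real^'d::finite) $ i = 1"
  by (simp add: cart_eq_inner_axis inner_sum_Basis)

lemma One_cart' [simp]: "(\<Sum>x\<in>Basis. (x::real^'d::finite) $ i) = 1"
  using One_cart[of i] by (simp add: sum_component)

lemma box_pair_nonempty:
  "((1/2) *\<^sub>R One, (1/4) *\<^sub>R One) \<in> {p. fst p \<in> (ucube_int::(real^'d::finite) set) \<and> snd p \<in> ucube_int \<and> fst p \<noteq> snd p}"
proof -
  obtain i :: 'd where True by auto
  have "((1/2) *\<^sub>R One :: real^'d) $ i \<noteq> ((1/4) *\<^sub>R One :: real^'d) $ i" by simp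
  then show ?thesis by (auto simp: mem_box_cart)
qed

lemma holder_extract:
  fixes \<phi> :: "real^'d::finite \<Rightarrow> real"
  assumes h: "holder_norm 2 1 \<phi> \<le> ereal H"
  shows "continuous_on ucube \<phi>"
    and "\<And>x. x \<in> ucube \<Longrightarrow> \<bar>\<phi> x\<bar> \<le> H"
    and "\<And>x. x \<in> ucube_int \<Longrightarrow> \<phi> differentiable (at x)"
    and "\<And>x i. x \<in> ucube_int \<Longrightarrow> \<bar>pderivs [i] \<phi> x\<bar> \<le> H"
proof -
  define C where "C = (continuous_on ucube \<phi> \<and>
        (\<forall>ls::'d list. length ls < 2 \<longrightarrow> (\<forall>x\<in>ucube_int. pderivs ls \<phi> differentiable (at x))))"
  define A where "A = (SUP ls\<in>{ls::'d list. length ls \<le> 2}.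
          SUP x\<in>(if ls = [] then ucube else ucube_int). ereal \<bar>pderivs ls \<phi> x\<bar>)"
  define B where "B = (SUP ls\<in>{ls::'d list. length ls = 2}.
          SUP p\<in>{p. fst p \<in> (if (2::nat) = 0 then ucube else ucube_int) \<and>
                     snd p \<in> (if (2::nat) = 0 then ucube else ucube_int) \<and> fst p \<noteq> snd p}.
            ereal (\<bar>pderivs ls \<phi> (fst p) - pderivs ls \<phi> (snd p)\<bar> / (dist (fst p) (snd p)) powr 1))"
  have hn: "holder_norm 2 1 \<phi> = (if C then A + B else \<infinity>)"
    unfolding holder_norm_def C_def A_def B_def by simp
  have C: C using h hn by (cases C) auto
  then show "continuous_on ucube \<phi>" by (simp add: C_def)
  show "\<And>x. x \<in> ucube_int \<Longrightarrow> \<phi> differentiable (at x)"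
    using C unfolding C_def by (metis length_0_conv pderivs.simps(1) zero_less_numeral)
  obtain i0 :: 'd where True by auto
  have B0: "0 \<le> B"
  proof -
    have "[i0,i0] \<in> {ls::'d list. length ls = 2}" by simp
    have "0 \<le> ereal (\<bar>pderivs [i0,i0] \<phi> ((1/2) *\<^sub>R One) - pderivs [i0,i0] \<phi> ((1/4) *\<^sub>R One)\<bar> / (dist ((1/2) *\<^sub>R One :: real^'d) ((1/4) *\<^sub>R One)) powr 1)"
      by simp
    also have "\<dots> \<le> B" unfolding B_def
      apply (rule SUP_upper2[of "[i0,i0]"], simp)
      apply (rule SUP_upper2[of "((1/2) *\<^sub>R One, (1/4) *\<^sub>R One)"])
      using box_pair_nonempty by auto
    finally show ?thesis .
  qed
  have AH: "A \<le> ereal H"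
  proof -
    have "A + B \<le> ereal H" using h hn C by simp
    moreover have "A \<le> A + B" using B0 by (simp add: add_increasing2)
    ultimately show ?thesis by simp
  qed
  show "\<bar>\<phi> x\<bar> \<le> H" if "x \<in> ucube" for x
  proof -
    have "ereal \<bar>pderivs [] \<phi> x\<bar> \<le> A" unfolding A_def
      apply (rule SUP_upper2[of "[]"], simp)
      apply (rule SUP_upper2[OF _ order_refl])
      using that by auto
    then show ?thesis using AH by (metis ereal_less_eq(3) order.trans pderivs.simps(1))
  qed
  show "\<bar>pderivs [i] \<phi> x\<bar> \<le> H" if "x \<in> ucube_int" for x i
  proof -
    have "ereal \<bar>pderivs [i] \<phi> x\<bar> \<le> A" unfolding A_def
      apply (rule SUP_upper2[of "[i]"], simp)
      apply (rule SUP_upper2[OF _ order_refl])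
      using that by auto
    then show ?thesis using AH by (metis ereal_less_eq(3) order.trans)
  qed
qed

lemma box_ne: "(ucube_int :: (real^'d::finite) set) \<noteq> {}"
  using box_pair_nonempty by auto

lemma closure_ucube_int: "closure (ucube_int :: (real^'d::finite) set) = ucube"
  using box_ne by simp

lemma deriv_bound_vec:
  fixes \<phi> :: "real^'d::finite \<Rightarrow> real"
  assumes d: "\<phi> differentiable (at x)" and b: "\<And>i. \<bar>pderivs [i] \<phi> x\<bar> \<le> H"
  shows "\<bar>frechet_derivative \<phi> (at x) v\<bar> \<le> real CARD('d) * H * norm v"
proof -
  define D where "D = frechet_derivative \<phi> (at x)"
  have lin: "linear D" unfolding D_def by (rule linear_frechet_derivative[OF d])
  have "D v = D (\<Sum>i\<in>UNIV. (v$i) *\<^sub>R axis i 1)"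
    using basis_expansion[of v] by (simp add: scalar_mult_eq_scaleR)
  also have "\<dots> = (\<Sum>i\<in>UNIV. (v$i) * D (axis i 1))"
    by (simp add: linear_sum[OF lin] linear_scale[OF lin])
  finally have eq: "D v = (\<Sum>i\<in>UNIV. (v$i) * pderivs [i] \<phi> x)"
    by (simp add: D_def)
  have "\<bar>D v\<bar> \<le> (\<Sum>i\<in>UNIV. \<bar>v$i\<bar> * \<bar>pderivs [i] \<phi> x\<bar>)"
    unfolding eq by (rule order.trans[OF sum_abs]) (simp add: abs_mult)
  also have "\<dots> \<le> (\<Sum>i\<in>(UNIV::'d set). norm v * H)"
    by (intro sum_mono mult_mono component_le_norm_cart b) auto
  finally show ?thesis by (simp add: D_def mult_ac)
qed

lemma lipschitz_int:
  fixes \<phi> :: "real^'d::finite \<Rightarrow> real"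
  assumes d: "\<And>x. x \<in> ucube_int \<Longrightarrow> \<phi> differentiable (at x)"
    and b: "\<And>x i. x \<in> ucube_int \<Longrightarrow> \<bar>pderivs [i] \<phi> x\<bar> \<le> H"
    and x: "x \<in> ucube_int" and y: "y \<in> ucube_int"
  shows "\<bar>\<phi> x - \<phi> y\<bar> \<le> real CARD('d) * H * norm (x - y)"
proof -
  have "norm (\<phi> x - \<phi> y) \<le> real CARD('d) * H * norm (x - y)"
  proof (rule differentiable_bound[where S=ucube_int and f'="\<lambda>x. frechet_derivative \<phi> (at x)"])
    show "convex (ucube_int :: (real^'d) set)" by (rule convex_box)
    show "(\<phi> has_derivative frechet_derivative \<phi> (at z)) (at z within ucube_int)" if "z \<in> ucube_int" for z
      using d[OF that] by (simp add: frechet_derivative_works has_derivative_at_withinI)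
    show "onorm (frechet_derivative \<phi> (at z)) \<le> real CARD('d) * H" if "z \<in> ucube_int" for z
      by (rule onorm_le) (use deriv_bound_vec[OF d[OF that] b[OF that]] in simp)
  qed (use x y in auto)
  then show ?thesis by simp
qed

lemma closure_le0:
  fixes g :: "'a::metric_space \<Rightarrow> real"
  assumes "continuous_on (closure S) g" "\<And>z. z \<in> S \<Longrightarrow> g z \<le> 0" "x \<in> closure S"
  shows "g x \<le> 0"
proof -
  have "norm (max (g x) 0) \<le> 0"
    by (rule continuous_on_closure_norm_le[of S "\<lambda>z. max (g z) 0" 0 x])
       (use assms in \<open>auto intro!: continuous_intros\<close>)
  then show ?thesis by simp
qed

lemma lipschitz_cube:
  fixes \<phi> :: "real^'d::finite \<Rightarrow> real"
  assumes c: "continuous_on ucube \<phi>"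
    and d: "\<And>x. x \<in> ucube_int \<Longrightarrow> \<phi> differentiable (at x)"
    and b: "\<And>x i. x \<in> ucube_int \<Longrightarrow> \<bar>pderivs [i] \<phi> x\<bar> \<le> H"
    and x: "x \<in> ucube" and y: "y \<in> ucube"
  shows "\<bar>\<phi> x - \<phi> y\<bar> \<le> real CARD('d) * H * norm (x - y)"
proof -
  define L where "L = real CARD('d) * H"
  have step1: "\<bar>\<phi> x' - \<phi> y'\<bar> \<le> L * norm (x' - y')" if x': "x' \<in> ucube" and y': "y' \<in> ucube_int" for x' y'
  proof -
    have "(\<lambda>z. \<bar>\<phi> z - \<phi> y'\<bar> - L * norm (z - y')) x' \<le> 0"
      apply (rule closure_le0[where S="ucube_int :: (real^'d) set" and g="\<lambda>z. \<bar>\<phi> z - \<phi> y'\<bar> - L * norm (z - y')"])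
      subgoal unfolding closure_ucube_int by (intro continuous_intros c)
      subgoal using lipschitz_int[OF d b _ y'] by (auto simp: L_def)
      subgoal using x' closure_ucube_int by simp
      done
    then show ?thesis by simp
  qed
  have "(\<lambda>z. \<bar>\<phi> x - \<phi> z\<bar> - L * norm (x - z)) y \<le> 0"
    apply (rule closure_le0[where S="ucube_int :: (real^'d) set" and g="\<lambda>z. \<bar>\<phi> x - \<phi> z\<bar> - L * norm (x - z)"])
    subgoal unfolding closure_ucube_int by (intro continuous_intros c)
    subgoal using step1[OF x] by auto
    subgoal using y closure_ucube_int by simp
    done
  then show ?thesis by (simp add: L_def)
qed

lemma floor_eq_close:
  fixes a b :: real
  assumes "\<lfloor>a\<rfloor> = \<lfloor>b\<rfloor>"
  shows "\<bar>a - b\<bar> < 1"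
proof -
  have "of_int \<lfloor>a\<rfloor> \<le> a" "a < of_int \<lfloor>a\<rfloor> + 1" "of_int \<lfloor>b\<rfloor> \<le> b" "b < of_int \<lfloor>b\<rfloor> + 1"
    by linarith+
  then show ?thesis using assms by linarith
qed

lemma floor_bound:
  fixes t c :: real
  assumes "\<bar>t\<bar> \<le> c"
  shows "\<lfloor>t\<rfloor> \<in> {-\<lceil>c\<rceil>-1..\<lceil>c\<rceil>}"
proof -
  have "\<lfloor>t\<rfloor> \<le> \<lfloor>c\<rfloor>" using assms by (intro floor_mono) simp
  also have "\<dots> \<le> \<lceil>c\<rceil>" by (rule floor_le_ceiling)
  finally have 1: "\<lfloor>t\<rfloor> \<le> \<lceil>c\<rceil>" .
  have "\<lfloor>-c\<rfloor> \<le> \<lfloor>t\<rfloor>" using assms by (intro floor_mono) simp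
  moreover have "\<lfloor>-c\<rfloor> = - \<lceil>c\<rceil>" by (simp add: ceiling_def)
  ultimately show ?thesis using 1 by simp
qed

lemma div_close:
  fixes a b e :: real
  assumes "e > 0" "\<bar>a / e - b / e\<bar> < 1"
  shows "\<bar>a - b\<bar> < e"
proof -
  have "(a / e - b / e) * e = a - b" using assms(1) by (simp add: algebra_simps)
  then have "\<bar>a - b\<bar> = \<bar>a / e - b / e\<bar> * e" using assms(1) by (metis abs_mult abs_of_pos)
  also have "\<dots> < 1 * e" using assms by (intro mult_strict_right_mono) auto
  finally show ?thesis by simp
qed

lemma finite_net:
  fixes K :: "(real^'d::finite \<Rightarrow> real) set"
  assumes bnd: "\<And>\<phi> x. \<phi> \<in> K \<Longrightarrow> x \<in> ucube \<Longrightarrow> \<bar>\<phi> x\<bar> \<le> H"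
    and lip: "\<And>\<phi> x y. \<phi> \<in> K \<Longrightarrow> x \<in> ucube \<Longrightarrow> y \<in> ucube \<Longrightarrow> \<bar>\<phi> x - \<phi> y\<bar> \<le> L * norm (x - y)"
    and \<delta>: "\<delta> > 0"
  shows "\<exists>F. finite F \<and> F \<subseteq> K \<and> (\<forall>\<phi>\<in>K. \<exists>\<psi>\<in>F. \<forall>x\<in>ucube. \<bar>\<phi> x - \<psi> x\<bar> \<le> \<delta>)"
proof -
  define L' where "L' = \<bar>L\<bar> + 1"
  have L': "L' > 0" "L \<le> L'" by (auto simp: L'_def)
  define r where "r = \<delta> / (4 * L')"
  define \<eta> where "\<eta> = \<delta> / 4"
  have r: "r > 0" "L' * r = \<delta> / 4" using L' \<delta> by (auto simp: r_def)
  have \<eta>: "\<eta> > 0" using \<delta> by (simp add: \<eta>_def)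
  obtain G :: "(real^'d) set" where G: "G \<subseteq> ucube" "finite G" "ucube \<subseteq> (\<Union>c\<in>G. ball c r)"
  proof (rule compactE_image[of "ucube :: (real^'d) set" "ucube :: (real^'d) set" "\<lambda>c. ball c r"])
    show "ucube \<subseteq> (\<Union>c\<in>ucube. ball c r)" using r by auto
  qed (auto intro: that)
  define key where "key = (\<lambda>\<phi>::real^'d \<Rightarrow> real. restrict (\<lambda>g. \<lfloor>\<phi> g / \<eta>\<rfloor>) G)"
  define N where "N = \<lceil>\<bar>H\<bar> / \<eta>\<rceil>"
  have keyin: "key ` K \<subseteq> PiE G (\<lambda>_. {-N-1..N})"
  proof (rule image_subsetI)
    fix \<phi> assume "\<phi> \<in> K"
    { fix g assume g: "g \<in> G"
      then have "\<bar>\<phi> g\<bar> \<le> \<bar>H\<bar>" using bnd[OF \<open>\<phi> \<in> K\<close>] G(1) by force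
      then have "\<bar>\<phi> g / \<eta>\<bar> \<le> \<bar>H\<bar> / \<eta>" using \<eta> by (simp add: divide_right_mono)
      then have "\<lfloor>\<phi> g / \<eta>\<rfloor> \<in> {-N-1..N}" unfolding N_def by (rule floor_bound) }
    then show "key \<phi> \<in> PiE G (\<lambda>_. {-N-1..N})" by (auto simp: key_def)
  qed
  have fin: "finite (key ` K)"
    by (rule finite_subset[OF keyin]) (intro finite_PiE G(2), simp)
  define rep where "rep = (\<lambda>k. SOME \<psi>. \<psi> \<in> K \<and> key \<psi> = k)"
  define F where "F = rep ` (key ` K)"
  have rep: "rep (key \<phi>) \<in> K \<and> key (rep (key \<phi>)) = key \<phi>" if "\<phi> \<in> K" for \<phi>
    unfolding rep_def by (rule someI[of _ \<phi>]) (use that in auto)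
  have "\<forall>\<phi>\<in>K. \<exists>\<psi>\<in>F. \<forall>x\<in>ucube. \<bar>\<phi> x - \<psi> x\<bar> \<le> \<delta>"
  proof
    fix \<phi> assume \<phi>: "\<phi> \<in> K"
    define \<psi> where "\<psi> = rep (key \<phi>)"
    have \<psi>: "\<psi> \<in> K" "key \<psi> = key \<phi>" using rep[OF \<phi>] by (auto simp: \<psi>_def)
    have "\<psi> \<in> F" using \<phi> by (auto simp: F_def \<psi>_def)
    moreover have "\<bar>\<phi> x - \<psi> x\<bar> \<le> \<delta>" if x: "x \<in> ucube" for x
    proof -
      obtain g where g: "g \<in> G" "dist g x < r" using G(3) x by auto
      have gc: "g \<in> ucube" using g G(1) by auto
      have "\<lfloor>\<phi> g / \<eta>\<rfloor> = \<lfloor>\<psi> g / \<eta>\<rfloor>"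
        using fun_cong[OF \<psi>(2), of g] g by (simp add: key_def)
      then have "\<bar>\<phi> g / \<eta> - \<psi> g / \<eta>\<bar> < 1" by (rule floor_eq_close)
      then have "\<bar>\<phi> g - \<psi> g\<bar> < \<eta>" using \<eta> div_close by blast
      moreover have "\<bar>\<phi> x - \<phi> g\<bar> \<le> \<delta> / 4"
      proof -
        have "\<bar>\<phi> x - \<phi> g\<bar> \<le> L * norm (x - g)" using lip[OF \<phi> x gc] .
        also have "\<dots> \<le> L' * r"
          using g(2) L' by (intro mult_mono) (auto simp: dist_norm norm_minus_commute)
        finally show ?thesis using r by simp
      qed
      moreover have "\<bar>\<psi> g - \<psi> x\<bar> \<le> \<delta> / 4"
      proof -
        have "\<bar>\<psi> g - \<psi> x\<bar> \<le> L * norm (g - x)" using lip[OF \<psi>(1) gc x] .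
        also have "\<dots> \<le> L' * r"
          using g(2) L' by (intro mult_mono) (auto simp: dist_norm)
        finally show ?thesis using r by simp
      qed
      ultimately show ?thesis unfolding \<eta>_def by linarith
    qed
    ultimately show "\<exists>\<psi>\<in>F. \<forall>x\<in>ucube. \<bar>\<phi> x - \<psi> x\<bar> \<le> \<delta>" by blast
  qed
  moreover have "F \<subseteq> K" using rep by (auto simp: F_def)
  moreover have "finite F" using fin by (simp add: F_def)
  ultimately show ?thesis by blast
qed

lemma (in prob_space) slln_bounded:
  fixes X :: "nat \<Rightarrow> 'a \<Rightarrow> real"
  assumes indep: "indep_vars (\<lambda>_. borel) X {1..}"
    and bnd: "\<And>j x. j \<ge> 1 \<Longrightarrow> X j x \<in> {0..B}"
    and B: "B > 0"
    and ex: "\<And>j. j \<ge> 1 \<Longrightarrow> expectation (X j) = \<mu>"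
  shows "AE x in M. (\<lambda>n. (\<Sum>j\<in>{1..n}. X j x) / real n) \<longlonglongrightarrow> \<mu>"
proof -
  have rv[measurable]: "X j \<in> borel_measurable M" if "j \<ge> 1" for j
    using indep that unfolding indep_vars_def by auto
  have meas[measurable]: "(\<lambda>x. \<Sum>j\<in>{1..n}. X j x) \<in> borel_measurable M" for n
    by (rule borel_measurable_sum) (auto intro: rv)
  have key: "AE x in M. eventually (\<lambda>n. \<bar>(\<Sum>j\<in>{1..n}. X j x) / real n - \<mu>\<bar> < \<delta>) sequentially"
    if \<delta>: "\<delta> > 0" for \<delta>
  proof -
    define A where "A n = {x\<in>space M. real n * \<delta> \<le> \<bar>(\<Sum>j\<in>{1..n}. X j x) - real n * \<mu>\<bar>}" for n
    define q where "q = exp (- 2 * \<delta>\<^sup>2 / B\<^sup>2)"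
    have q: "0 < q" "q < 1" using \<delta> B by (auto simp: q_def)
    have Ameas[measurable]: "A n \<in> sets M" for n unfolding A_def by measurable
    have Abnd: "measure M (A n) \<le> 2 * q ^ n" for n
    proof (cases "n = 0")
      case True
      then show ?thesis by (simp add: prob_le_1 order.trans[OF prob_le_1])
    next
      case False
      have HI: "Hoeffding_ineq M {1..n} X (\<lambda>_. 0) (\<lambda>_. B)"
        unfolding Hoeffding_ineq_def
      proof unfold_locales
        show "finite {1..n}" by simp
        show "indep_vars (\<lambda>_. borel) X {1..n}" by (rule indep_vars_subset[OF indep]) auto
        show "AE x in M. X i x \<in> {0..B}" if "i \<in> {1..n}" for i
        proof -
          have "1 \<le> i" using that by simp
          then show ?thesis by (intro AE_I2 bnd)
        qed
      qed
      have "(\<Sum>i\<in>{1..n}. expectation (X i)) = (\<Sum>i\<in>{1..n}. \<mu>)"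
        by (rule sum.cong) (auto intro: ex)
      then have Esum: "(\<Sum>i\<in>{1..n}. expectation (X i)) = real n * \<mu>" by simp
      have "measure M (A n) \<le> 2 * exp (- 2 * (real n * \<delta>)\<^sup>2 / (\<Sum>i\<in>{1..n}. (B - 0)\<^sup>2))"
        unfolding A_def
      proof (rule Hoeffding_ineq.Hoeffding_ineq_abs_ge[OF HI, of "real n * \<delta>", unfolded Esum])
        show "0 \<le> real n * \<delta>" using \<delta> by simp
        have "0 < (\<Sum>i\<in>{1..n}. (B - 0)\<^sup>2)" using B False by (intro sum_pos) auto
        then show "0 < (\<Sum>i\<in>{1..n}. (B - 0)\<^sup>2)" .
      qed
      also have "(- 2 * (real n * \<delta>)\<^sup>2 / (\<Sum>i\<in>{1..n}. (B - 0)\<^sup>2)) = real n * (- 2 * \<delta>\<^sup>2 / B\<^sup>2)"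
        using False B by (simp add: power2_eq_square field_simps)
      also have "exp (real n * (- 2 * \<delta>\<^sup>2 / B\<^sup>2)) = q ^ n"
        unfolding q_def by (rule exp_of_nat_mult)
      finally show ?thesis .
    qed
    have sum: "summable (\<lambda>n. measure M (A n))"
    proof (rule summable_comparison_test'[where N=0])
      show "summable (\<lambda>n. 2 * q ^ n)" using q by (intro summable_mult summable_geometric) auto
      show "norm (measure M (A n)) \<le> 2 * q ^ n" for n using Abnd[of n] by simp
    qed
    have "AE x in M. eventually (\<lambda>n. x \<in> space M - A n) sequentially"
      by (rule borel_cantelli_AE1[OF Ameas _ sum]) (simp add: emeasure_eq_measure)
    then show ?thesis
    proof (rule AE_mp[OF _ AE_I2], safe)
      fix x assume x: "x \<in> space M" and ev: "eventually (\<lambda>n. x \<in> space M - A n) sequentially"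
      show "eventually (\<lambda>n. \<bar>(\<Sum>j\<in>{1..n}. X j x) / real n - \<mu>\<bar> < \<delta>) sequentially"
        using ev eventually_ge_at_top[of "1::nat"]
      proof eventually_elim
        case (elim n)
        then have "\<bar>(\<Sum>j\<in>{1..n}. X j x) - real n * \<mu>\<bar> < real n * \<delta>" using x by (auto simp: A_def)
        moreover have "(\<Sum>j\<in>{1..n}. X j x) / real n - \<mu> = ((\<Sum>j\<in>{1..n}. X j x) - real n * \<mu>) / real n"
          using elim by (simp add: field_simps)
        moreover have n: "real n > 0" using elim by simp
        ultimately show ?case
          by (simp only: abs_divide abs_of_pos[OF n] pos_divide_less_eq[OF n]) (metis mult.commute)
      qed
    qed
  qed
  have "AE x in M. \<forall>k::nat. eventually (\<lambda>n. \<bar>(\<Sum>j\<in>{1..n}. X j x) / real n - \<mu>\<bar> < 1 / Suc k) sequentially"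
    unfolding AE_all_countable by (intro allI key) simp
  then show ?thesis
  proof (rule eventually_mono)
    fix x assume k: "\<forall>k::nat. eventually (\<lambda>n. \<bar>(\<Sum>j\<in>{1..n}. X j x) / real n - \<mu>\<bar> < 1 / Suc k) sequentially"
    show "(\<lambda>n. (\<Sum>j\<in>{1..n}. X j x) / real n) \<longlonglongrightarrow> \<mu>"
    proof (rule tendstoI)
      fix e :: real assume e: "e > 0"
      obtain k where "inverse (real (Suc k)) < e" using reals_Archimedean[OF e] by auto
      then have ke: "1 / real (Suc k) < e" by (simp add: inverse_eq_divide)
      show "eventually (\<lambda>n. dist ((\<Sum>j\<in>{1..n}. X j x) / real n) \<mu> < e) sequentially"
        using k[rule_format, of k]
      proof eventually_elim
        case (elim n)
        then show ?case using ke unfolding dist_real_def by linarith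
      qed
    qed
  qed
qed

lemma unif_cube: "uniform_measure lborel (ucube :: (real^'d::finite) set) = density lborel (\<lambda>x. ennreal (indicator ucube x))"
proof -
  have "emeasure lborel (ucube :: (real^'d) set) = 1"
    by (simp add: emeasure_lborel_cbox_eq)
  then show ?thesis unfolding uniform_measure_def by (simp add: ennreal_indicator divide_ennreal_def)
qed

lemma integral_unif_pair:
  fixes f :: "(real^'d::finite) \<times> (real^'d) \<Rightarrow> real"
  assumes f: "f \<in> borel_measurable borel"
  shows "integral\<^sup>L (uniform_measure lborel ucube \<Otimes>\<^sub>M uniform_measure lborel ucube) f
       = integral\<^sup>L (lebesgue_on (ucube \<times> ucube)) f"
proof -
  let ?S = "ucube \<times> ucube :: ((real^'d) \<times> (real^'d)) set"
  have sf: "sigma_finite_measure (density lborel (\<lambda>x. ennreal (indicator (ucube :: (real^'d) set) x)))"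
  proof -
    have "emeasure lborel (ucube :: (real^'d) set) = 1"
      by (simp add: emeasure_lborel_cbox_eq)
    then have "prob_space (uniform_measure lborel (ucube :: (real^'d) set))"
      by (intro prob_space_uniform_measure) auto
    then show ?thesis unfolding unif_cube by (rule prob_space_imp_sigma_finite)
  qed
  have "uniform_measure lborel ucube \<Otimes>\<^sub>M uniform_measure lborel ucube
      = density (lborel \<Otimes>\<^sub>M lborel) (\<lambda>(x,y). ennreal (indicator (ucube :: (real^'d) set) x) * ennreal (indicator (ucube :: (real^'d) set) y))"
    unfolding unif_cube
    by (rule pair_measure_density) (auto intro: sf lborel.sigma_finite_measure_axioms)
  also have "\<dots> = density lborel (\<lambda>p. ennreal (indicator ?S p))"
    unfolding lborel_prod
    by (intro arg_cong[where f="density lborel"] ext) (auto simp: indicator_def split: prod.splits)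
  finally have eq: "uniform_measure lborel ucube \<Otimes>\<^sub>M uniform_measure lborel ucube = density lborel (\<lambda>p. ennreal (indicator ?S p))" .
  have "integral\<^sup>L (density lborel (\<lambda>p. ennreal (indicator ?S p))) f = integral\<^sup>L lborel (\<lambda>p. indicator ?S p *\<^sub>R f p)"
    by (rule integral_density) (auto simp: f intro!: borel_measurable_indicator borel_closed closed_Times)
  also have "\<dots> = integral\<^sup>L lebesgue (\<lambda>p. indicator ?S p *\<^sub>R f p)"
    by (rule integral_completion[symmetric])
       (auto simp: f intro!: borel_measurable_times borel_measurable_indicator borel_closed closed_Times)
  also have "\<dots> = integral\<^sup>L (lebesgue_on ?S) f"
  proof (rule integral_restrict_space[symmetric])
    have "?S \<in> sets borel" by (intro borel_closed closed_Times closed_cbox)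
    then show "?S \<inter> space lebesgue \<in> sets lebesgue" by (simp add: sets_completionI_sets)
  qed
  finally show ?thesis using eq by simp
qed

abbreviation cl :: "real^'d::finite \<Rightarrow> real^'d" where "cl \<equiv> clamp 0 One"

lemma cl_in: "cl x \<in> ucube"
  by (rule clamp_in_interval) (simp add: inner_sum_Basis)

lemma cl_id: "x \<in> ucube \<Longrightarrow> cl x = x"
  by (rule clamp_cancel_cbox)

lemma mid_in: "u \<in> ucube \<Longrightarrow> u' \<in> ucube \<Longrightarrow> (1/2) *\<^sub>R (u + u') \<in> (ucube :: (real^'d::finite) set)"
  apply (auto simp: mem_box_cart)
  by (smt (verit))

definition gfun :: "real \<Rightarrow> (real^'d::finite \<Rightarrow> real) \<Rightarrow> (real^'d) \<times> (real^'d) \<Rightarrow> real" where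
  "gfun \<kappa> \<phi> p = relu (\<phi> (cl ((1/2) *\<^sub>R (cl (fst p) + cl (snd p)))) - (\<phi> (cl (fst p)) + \<phi> (cl (snd p))) / 2
                     + \<kappa> / 8 * (norm (cl (fst p) - cl (snd p)))\<^sup>2)"

lemma gfun_eq: "u \<in> ucube \<Longrightarrow> u' \<in> ucube \<Longrightarrow> gfun \<kappa> \<phi> (u, u') = penalty_integrand \<kappa> \<phi> u u'"
  by (simp add: gfun_def penalty_integrand_def cl_id mid_in)

lemma cont_cl: "continuous_on UNIV (\<lambda>x. f (cl x))" if "continuous_on ucube f" for f :: "real^'d::finite \<Rightarrow> 'b::metric_space"
  using clamp_continuous_at[OF that] by (simp add: continuous_at_imp_continuous_on)

lemma cont_cl_id: "continuous_on UNIV (cl :: real^'d::finite \<Rightarrow> real^'d)"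
  using cont_cl[of "\<lambda>x. x"] by (simp add: continuous_on_id)

lemma relu_cont: "continuous_on UNIV relu"
  unfolding relu_def[abs_def] by (intro continuous_intros)

lemma gfun_cont:
  assumes "continuous_on ucube \<phi>"
  shows "continuous_on UNIV (gfun \<kappa> \<phi>)"
proof -
  have c1: "continuous_on UNIV (\<lambda>x. \<phi> (cl x))" by (rule cont_cl[OF assms])
  have c2: "continuous_on UNIV cl" by (rule cont_cl_id)
  have "continuous_on UNIV (\<lambda>p. relu ((\<lambda>x. \<phi> (cl x)) ((1/2) *\<^sub>R (cl (fst p) + cl (snd p)))
        - ((\<lambda>x. \<phi> (cl x)) (fst p) + (\<lambda>x. \<phi> (cl x)) (snd p)) / 2
        + \<kappa> / 8 * (norm (cl (fst p) - cl (snd p)))\<^sup>2))"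
    apply (rule continuous_on_compose2[OF relu_cont _ subset_UNIV])
    apply (intro continuous_intros continuous_on_compose2[OF c1 _ subset_UNIV] continuous_on_compose2[OF c2 _ subset_UNIV])
    apply auto
    done
  moreover have "gfun \<kappa> \<phi> = (\<lambda>p. relu ((\<lambda>x. \<phi> (cl x)) ((1/2) *\<^sub>R (cl (fst p) + cl (snd p)))
        - ((\<lambda>x. \<phi> (cl x)) (fst p) + (\<lambda>x. \<phi> (cl x)) (snd p)) / 2
        + \<kappa> / 8 * (norm (cl (fst p) - cl (snd p)))\<^sup>2))"
    by (rule ext) (simp add: gfun_def cl_id cl_in)
  ultimately show ?thesis by simp
qed

lemma gfun_meas: "continuous_on ucube \<phi> \<Longrightarrow> gfun \<kappa> \<phi> \<in> borel_measurable borel"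
  by (rule borel_measurable_continuous_onI[OF gfun_cont])

lemma norm_cube_diff:
  fixes x y :: "real^'d::finite"
  assumes x: "x \<in> ucube" and y: "y \<in> ucube"
  shows "norm (x - y) \<le> real CARD('d)"
proof -
  have "norm (x - y) \<le> (\<Sum>i\<in>UNIV. \<bar>(x - y)$i\<bar>)" by (rule norm_le_l1_cart)
  also have "\<dots> \<le> (\<Sum>i\<in>(UNIV::'d set). 1)"
    using x y by (intro sum_mono) (auto simp: mem_box_cart abs_le_iff; smt (verit))
  finally show ?thesis by simp
qed

lemma gfun_bnd:
  fixes \<phi> :: "real^'d::finite \<Rightarrow> real"
  assumes bnd: "\<And>x. x \<in> ucube \<Longrightarrow> \<bar>\<phi> x\<bar> \<le> H"
  shows "gfun \<kappa> \<phi> p \<in> {0 .. 2 * \<bar>H\<bar> + \<bar>\<kappa>\<bar> * real CARD('d)^2}"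
proof -
  define N where "N = norm (cl (fst p) - cl (snd p))"
  define C where "C = real CARD('d)"
  have n: "N \<le> C" unfolding N_def C_def by (rule norm_cube_diff[OF cl_in cl_in])
  have N0: "0 \<le> N" by (simp add: N_def)
  have "N\<^sup>2 \<le> C^2" by (rule power_mono[OF n N0])
  have "\<bar>\<kappa> / 8 * N\<^sup>2\<bar> = \<bar>\<kappa>\<bar> / 8 * N\<^sup>2" by (simp add: abs_mult)
  also have "\<dots> \<le> \<bar>\<kappa>\<bar> * N\<^sup>2" by (simp add: mult_right_mono)
  also have "\<dots> \<le> \<bar>\<kappa>\<bar> * C\<^sup>2" by (rule mult_left_mono) (auto simp: \<open>N\<^sup>2 \<le> C^2\<close>)
  finally have r: "\<bar>\<kappa> / 8 * N\<^sup>2\<bar> \<le> \<bar>\<kappa>\<bar> * C\<^sup>2" .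
  define z where "z = \<phi> (cl ((1/2) *\<^sub>R (cl (fst p) + cl (snd p)))) - (\<phi> (cl (fst p)) + \<phi> (cl (snd p))) / 2
                     + \<kappa> / 8 * N\<^sup>2"
  have h: "\<bar>\<phi> (cl x)\<bar> \<le> \<bar>H\<bar>" for x using bnd[OF cl_in[of x]] by simp
  have "z \<le> 2 * \<bar>H\<bar> + \<bar>\<kappa>\<bar> * C\<^sup>2"
    using h[of "(1/2) *\<^sub>R (cl (fst p) + cl (snd p))"] h[of "fst p"] h[of "snd p"] r
    unfolding z_def by (simp add: abs_le_iff field_simps)
  moreover have "0 \<le> 2 * \<bar>H\<bar> + \<bar>\<kappa>\<bar> * C\<^sup>2" by simp
  ultimately have "relu z \<in> {0 .. 2 * \<bar>H\<bar> + \<bar>\<kappa>\<bar> * C\<^sup>2}" by (simp add: relu_def)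
  then show ?thesis by (simp add: gfun_def z_def N_def C_def)
qed

lemma relu_lip: "\<bar>relu a - relu b\<bar> \<le> \<bar>a - b\<bar>"
  by (simp add: relu_def)

lemma gfun_lip:
  assumes "\<And>x. x \<in> ucube \<Longrightarrow> \<bar>\<phi> x - \<psi> x\<bar> \<le> \<delta>"
  shows "\<bar>gfun \<kappa> \<phi> p - gfun \<kappa> \<psi> p\<bar> \<le> 2 * \<delta>"
proof -
  have h1: "- \<delta> \<le> \<phi> (cl x) - \<psi> (cl x)" and h2: "\<phi> (cl x) - \<psi> (cl x) \<le> \<delta>" for x
    using assms[OF cl_in[of x]] by (simp_all add: abs_le_iff)
  define m where "m = (1/2) *\<^sub>R (cl (fst p) + cl (snd p))"
  define r where "r = \<kappa> / 8 * (norm (cl (fst p) - cl (snd p)))\<^sup>2"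
  have "\<bar>(\<phi> (cl m) - (\<phi> (cl (fst p)) + \<phi> (cl (snd p))) / 2 + r)
        - (\<psi> (cl m) - (\<psi> (cl (fst p)) + \<psi> (cl (snd p))) / 2 + r)\<bar> \<le> 2 * \<delta>"
    using h1[of m] h1[of "fst p"] h1[of "snd p"] h2[of m] h2[of "fst p"] h2[of "snd p"]
    by (simp add: abs_le_iff field_simps)
  then show ?thesis unfolding gfun_def m_def[symmetric] r_def[symmetric]
    by (rule order.trans[OF relu_lip])
qed

lemma pen_lip:
  assumes "\<And>x. x \<in> ucube \<Longrightarrow> \<bar>\<phi> x - \<psi> x\<bar> \<le> \<delta>" "u \<in> ucube" "u' \<in> ucube"
  shows "\<bar>penalty_integrand \<kappa> \<phi> u u' - penalty_integrand \<kappa> \<psi> u u'\<bar> \<le> 2 * \<delta>"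
  using gfun_lip[OF assms(1), where \<kappa>=\<kappa> and p="(u,u')"] gfun_eq[OF assms(2,3)] by simp

lemma per_phi:
  fixes \<phi> :: "real^'d::finite \<Rightarrow> real" and U U' :: "nat \<Rightarrow> 'w \<Rightarrow> real^'d"
  assumes Pr: "prob_space Pr"
    and indep: "prob_space.indep_vars Pr (\<lambda>_. borel)
                  (\<lambda>k. case k of Inl j \<Rightarrow> U j | Inr j \<Rightarrow> U' j) ({1..} <+> {1..})"
    and unifU: "\<forall>j\<ge>1. distr Pr borel (U j) = uniform_measure lborel ucube"
    and unifU': "\<forall>j\<ge>1. distr Pr borel (U' j) = uniform_measure lborel ucube"
    and cont: "continuous_on ucube \<phi>"
    and bnd: "\<And>x. x \<in> ucube \<Longrightarrow> \<bar>\<phi> x\<bar> \<le> H"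
  shows "AE \<omega> in Pr. (\<lambda>n. (\<Sum>j\<in>{1..n}. gfun \<kappa> \<phi> (U j \<omega>, U' j \<omega>)) / real n) \<longlonglongrightarrow> penalty \<kappa> \<phi>"
proof -
  interpret P: prob_space Pr by (rule Pr)
  define Z where "Z = (\<lambda>k. case k of Inl j \<Rightarrow> U j | Inr j \<Rightarrow> U' j)"
  define I where "I = ({1..} <+> {1..} :: (nat + nat) set)"
  have indZ: "P.indep_vars (\<lambda>_. borel) Z I" using indep by (simp add: Z_def I_def)
  define g where "g = gfun \<kappa> \<phi>"
  have gm: "g \<in> borel_measurable borel" unfolding g_def by (rule gfun_meas[OF cont])
  have gm2: "g \<in> borel_measurable (borel \<Otimes>\<^sub>M borel)" using gm by (simp add: borel_prod)
  define X where "X = (\<lambda>j \<omega>. g (U j \<omega>, U' j \<omega>))"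
  define K where "K = (\<lambda>j::nat. {Inl j, Inr j} :: (nat + nat) set)"
  have indR: "P.indep_vars (\<lambda>j. PiM (K j) (\<lambda>_. borel)) (\<lambda>j \<omega>. restrict (\<lambda>i. Z i \<omega>) (K j)) {1..}"
    by (rule P.indep_vars_restrict[OF indZ]) (auto simp: K_def I_def disjoint_family_on_def)
  have indX: "P.indep_vars (\<lambda>_. borel) X {1..}"
  proof -
    have "P.indep_vars (\<lambda>_. borel) (\<lambda>j \<omega>. (\<lambda>f. g (f (Inl j), f (Inr j))) (restrict (\<lambda>i. Z i \<omega>) (K j))) {1..}"
    proof (rule P.indep_vars_compose2[OF indR])
      fix j :: nat assume "j \<in> {1..}"
      have "(\<lambda>f. (f (Inl j), f (Inr j))) \<in> measurable (PiM (K j) (\<lambda>_. borel)) (borel \<Otimes>\<^sub>M borel)"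
        by (intro measurable_Pair measurable_component_singleton) (auto simp: K_def)
      then show "(\<lambda>f. g (f (Inl j), f (Inr j))) \<in> measurable (PiM (K j) (\<lambda>_. borel)) borel"
        using gm2 by (rule measurable_compose[where f="\<lambda>f. (f (Inl j), f (Inr j))"])
    qed
    moreover have "(\<lambda>j \<omega>. (\<lambda>f. g (f (Inl j), f (Inr j))) (restrict (\<lambda>i. Z i \<omega>) (K j))) = X"
      by (auto simp: X_def K_def Z_def fun_eq_iff)
    ultimately show ?thesis by simp
  qed
  define Bd where "Bd = 2 * \<bar>H\<bar> + \<bar>\<kappa>\<bar> * real CARD('d)^2 + 1"
  have Xb: "X j x \<in> {0..Bd}" for j x
    using gfun_bnd[where \<phi>=\<phi> and H=H and \<kappa>=\<kappa> and p="(U j x, U' j x)", OF bnd] by (auto simp: X_def g_def Bd_def)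
  have Bd: "Bd > 0" unfolding Bd_def by (simp add: add_nonneg_pos)
  have EX: "P.expectation (X j) = penalty \<kappa> \<phi>" if j: "j \<ge> 1" for j
  proof -
    have "P.indep_var (PiM {Inl j} (\<lambda>_. borel)) (\<lambda>\<omega>. restrict (\<lambda>i. Z i \<omega>) {Inl j})
                       (PiM {Inr j} (\<lambda>_. borel)) (\<lambda>\<omega>. restrict (\<lambda>i. Z i \<omega>) {Inr j})"
      by (rule P.indep_var_restrict[OF indZ]) (use j in \<open>auto simp: I_def\<close>)
    then have "P.indep_var borel ((\<lambda>f. f (Inl j)) \<circ> (\<lambda>\<omega>. restrict (\<lambda>i. Z i \<omega>) {Inl j}))
                           borel ((\<lambda>f. f (Inr j)) \<circ> (\<lambda>\<omega>. restrict (\<lambda>i. Z i \<omega>) {Inr j}))"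
      by (rule P.indep_var_compose) (auto intro: measurable_component_singleton)
    moreover have "((\<lambda>f. f (Inl j)) \<circ> (\<lambda>\<omega>. restrict (\<lambda>i. Z i \<omega>) {Inl j})) = U j"
      "((\<lambda>f. f (Inr j)) \<circ> (\<lambda>\<omega>. restrict (\<lambda>i. Z i \<omega>) {Inr j})) = U' j"
      by (auto simp: Z_def fun_eq_iff)
    ultimately have iv: "P.indep_var borel (U j) borel (U' j)" by simp
    then have jd: "distr Pr (borel \<Otimes>\<^sub>M borel) (\<lambda>x. (U j x, U' j x)) = uniform_measure lborel ucube \<Otimes>\<^sub>M uniform_measure lborel ucube"
      using unifU unifU' j by (simp add: P.indep_var_distribution_eq)
    have rv: "(\<lambda>x. (U j x, U' j x)) \<in> measurable Pr (borel \<Otimes>\<^sub>M borel)"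
      using iv by (auto simp: P.indep_var_distribution_eq intro: measurable_Pair)
    have "P.expectation (X j) = integral\<^sup>L (distr Pr (borel \<Otimes>\<^sub>M borel) (\<lambda>x. (U j x, U' j x))) g"
      unfolding X_def by (rule integral_distr[symmetric, OF rv gm2])
    also have "\<dots> = integral\<^sup>L (lebesgue_on (ucube \<times> ucube)) g"
      unfolding jd by (rule integral_unif_pair[OF gm])
    also have "\<dots> = penalty \<kappa> \<phi>"
      unfolding penalty_def
      by (rule Bochner_Integration.integral_cong) (auto simp: g_def gfun_eq space_restrict_space)
    finally show ?thesis .
  qed
  have "AE \<omega> in Pr. (\<lambda>n. (\<Sum>j\<in>{1..n}. X j \<omega>) / real n) \<longlonglongrightarrow> penalty \<kappa> \<phi>"
    by (rule P.slln_bounded[OF indX _ Bd EX]) (use Xb in auto)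
  then show ?thesis by (simp add: X_def g_def)
qed

lemma unif_prob: "prob_space (uniform_measure lborel (ucube :: (real^'d::finite) set))"
proof -
  have "emeasure lborel (ucube :: (real^'d) set) = 1" by (simp add: emeasure_lborel_cbox_eq)
  then show ?thesis by (intro prob_space_uniform_measure) auto
qed

lemma pen_unif:
  fixes \<phi> :: "real^'d::finite \<Rightarrow> real"
  assumes cont: "continuous_on ucube \<phi>"
  shows "penalty \<kappa> \<phi> = integral\<^sup>L (uniform_measure lborel ucube \<Otimes>\<^sub>M uniform_measure lborel ucube) (gfun \<kappa> \<phi>)"
proof -
  have "integral\<^sup>L (uniform_measure lborel ucube \<Otimes>\<^sub>M uniform_measure lborel ucube) (gfun \<kappa> \<phi>)
      = integral\<^sup>L (lebesgue_on (ucube \<times> ucube)) (gfun \<kappa> \<phi>)"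
    by (rule integral_unif_pair[OF gfun_meas[OF cont]])
  also have "\<dots> = penalty \<kappa> \<phi>"
    unfolding penalty_def
    by (rule Bochner_Integration.integral_cong) (auto simp: gfun_eq space_restrict_space)
  finally show ?thesis by simp
qed

lemma pen_lip2:
  fixes \<phi> \<psi> :: "real^'d::finite \<Rightarrow> real"
  assumes c1: "continuous_on ucube \<phi>" and c2: "continuous_on ucube \<psi>"
    and b1: "\<And>x. x \<in> ucube \<Longrightarrow> \<bar>\<phi> x\<bar> \<le> H" and b2: "\<And>x. x \<in> ucube \<Longrightarrow> \<bar>\<psi> x\<bar> \<le> H"
    and d: "\<And>x. x \<in> ucube \<Longrightarrow> \<bar>\<phi> x - \<psi> x\<bar> \<le> \<delta>"
  shows "\<bar>penalty \<kappa> \<phi> - penalty \<kappa> \<psi>\<bar> \<le> 2 * \<delta>"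
proof -
  define Q where "Q = (uniform_measure lborel (ucube :: (real^'d) set) \<Otimes>\<^sub>M uniform_measure lborel (ucube :: (real^'d) set))"
  interpret Q: prob_space Q unfolding Q_def by (intro prob_space_pair unif_prob)
  have sQ: "sets Q = sets (borel \<Otimes>\<^sub>M borel)" unfolding Q_def by (intro sets_pair_measure_cong) simp_all
  have m: "gfun \<kappa> f \<in> borel_measurable Q" if "continuous_on ucube f" for f :: "real^'d \<Rightarrow> real"
  proof -
    have "gfun \<kappa> f \<in> borel_measurable (borel \<Otimes>\<^sub>M borel)"
      using gfun_meas[OF that] by (simp add: borel_prod)
    moreover have e: "measurable Q (borel :: real measure) = measurable (borel \<Otimes>\<^sub>M borel) borel"
      by (rule measurable_cong_sets[OF sQ refl])
    ultimately show ?thesis by simp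
  qed
  define C where "C = 2 * \<bar>H\<bar> + \<bar>\<kappa>\<bar> * real CARD('d)^2"
  have i1: "integrable Q (gfun \<kappa> \<phi>)"
    by (rule Q.integrable_const_bound[where B=C]) (use gfun_bnd[where \<phi>=\<phi> and H=H and \<kappa>=\<kappa>, OF b1] m[OF c1] in \<open>auto simp: C_def\<close>)
  have i2: "integrable Q (gfun \<kappa> \<psi>)"
    by (rule Q.integrable_const_bound[where B=C]) (use gfun_bnd[where \<phi>=\<psi> and H=H and \<kappa>=\<kappa>, OF b2] m[OF c2] in \<open>auto simp: C_def\<close>)
  have "penalty \<kappa> \<phi> - penalty \<kappa> \<psi> = integral\<^sup>L Q (\<lambda>p. gfun \<kappa> \<phi> p - gfun \<kappa> \<psi> p)"
    unfolding pen_unif[OF c1] pen_unif[OF c2] Q_def[symmetric] by (rule Bochner_Integration.integral_diff[OF i1 i2, symmetric])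
  also have "\<bar>\<dots>\<bar> \<le> integral\<^sup>L Q (\<lambda>p. 2 * \<delta>)"
    by (rule integral_abs_bound_integral) (use i1 i2 gfun_lip[OF d] in auto)
  also have "\<dots> = 2 * \<delta>" by (simp add: Q.prob_space)
  finally show ?thesis .
qed

lemma emp_lip:
  fixes \<phi> \<psi> :: "real^'d::finite \<Rightarrow> real"
  assumes uin: "\<And>j. j \<in> {1..N} \<Longrightarrow> u j \<in> ucube \<and> u' j \<in> ucube"
    and d: "\<And>x. x \<in> ucube \<Longrightarrow> \<bar>\<phi> x - \<psi> x\<bar> \<le> \<delta>" and d0: "0 \<le> \<delta>"
  shows "\<bar>(1 / real N) * (\<Sum>j\<in>{1..N}. penalty_integrand \<kappa> \<phi> (u j) (u' j))
         - (1 / real N) * (\<Sum>j\<in>{1..N}. penalty_integrand \<kappa> \<psi> (u j) (u' j))\<bar> \<le> 2 * \<delta>"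
proof (cases "N = 0")
  case True then show ?thesis using d0 by simp
next
  case False
  have "\<bar>(\<Sum>j\<in>{1..N}. penalty_integrand \<kappa> \<phi> (u j) (u' j)) - (\<Sum>j\<in>{1..N}. penalty_integrand \<kappa> \<psi> (u j) (u' j))\<bar>
      = \<bar>\<Sum>j\<in>{1..N}. penalty_integrand \<kappa> \<phi> (u j) (u' j) - penalty_integrand \<kappa> \<psi> (u j) (u' j)\<bar>"
    by (simp add: sum_subtractf)
  also have "\<dots> \<le> (\<Sum>j\<in>{1..N}. \<bar>penalty_integrand \<kappa> \<phi> (u j) (u' j) - penalty_integrand \<kappa> \<psi> (u j) (u' j)\<bar>)"
    by (rule sum_abs)
  also have "\<dots> \<le> (\<Sum>j\<in>{1..N}. 2 * \<delta>)"
    by (rule sum_mono) (use uin in \<open>auto intro: pen_lip[OF d]\<close>)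
  also have "\<dots> = real N * (2 * \<delta>)" by simp
  finally have "\<bar>(\<Sum>j\<in>{1..N}. penalty_integrand \<kappa> \<phi> (u j) (u' j)) - (\<Sum>j\<in>{1..N}. penalty_integrand \<kappa> \<psi> (u j) (u' j))\<bar>
      \<le> real N * (2 * \<delta>)" .
  moreover have "(1 / real N) * (\<Sum>j\<in>{1..N}. penalty_integrand \<kappa> \<phi> (u j) (u' j))
         - (1 / real N) * (\<Sum>j\<in>{1..N}. penalty_integrand \<kappa> \<psi> (u j) (u' j))
      = ((\<Sum>j\<in>{1..N}. penalty_integrand \<kappa> \<phi> (u j) (u' j)) - (\<Sum>j\<in>{1..N}. penalty_integrand \<kappa> \<psi> (u j) (u' j))) / real N"
    by (simp add: diff_divide_distrib)
  ultimately show ?thesis using False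
    by (simp add: abs_divide pos_divide_le_eq mult.commute[of "2 * \<delta>"])
qed

lemma ereal_tendsto_0I:
  fixes S :: "nat \<Rightarrow> ereal"
  assumes nn: "\<And>n. 0 \<le> S n" and ev: "\<And>e. e > 0 \<Longrightarrow> eventually (\<lambda>n. S n \<le> ereal e) sequentially"
  shows "S \<longlonglongrightarrow> 0"
proof (rule order_tendstoI)
  fix a :: ereal assume "a < 0"
  then show "eventually (\<lambda>n. a < S n) sequentially"
    by (intro always_eventually allI) (use nn in \<open>auto intro: less_le_trans\<close>)
next
  fix a :: ereal assume a: "0 < a"
  obtain e where e: "0 < e" "ereal e < a"
  proof (cases a)
    case (real r) then show ?thesis using a that[of "r/2"] by auto
  next
    case PInf then show ?thesis using that[of 1] by auto
  next
    case MInf then show ?thesis using a by auto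
  qed
  show "eventually (\<lambda>n. S n < a) sequentially"
    using ev[OF e(1)] by eventually_elim (use e(2) in auto)
qed

lemma final_arith:
  fixes a p x q d e :: real
  assumes "\<bar>a - p\<bar> < e / 2" "\<bar>x - a\<bar> \<le> 2 * d" "\<bar>q - p\<bar> \<le> 2 * d" "d < e / 8"
  shows "\<bar>x - q\<bar> \<le> e"
proof -
  have "\<bar>x - q\<bar> \<le> \<bar>x - a\<bar> + \<bar>a - p\<bar> + \<bar>q - p\<bar>" by (simp add: abs_le_iff; linarith)
  also have "\<dots> \<le> 2 * d + e / 2 + 2 * d" using assms by linarith
  also have "\<dots> \<le> e" using assms by linarith
  finally show ?thesis .
qed

theorem proposition7:
  fixes p_star :: "real^'d::finite \<Rightarrow> real"
    and phi_star :: "real^'d \<Rightarrow> real"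
    and M :: real and \<alpha> :: real
    and phi_eps :: "real \<Rightarrow> (real^'d \<Rightarrow> real)"
    and arch :: "real \<Rightarrow> nat list"
    and Htilde :: "real \<Rightarrow> real"
    and m :: "nat \<Rightarrow> nat"
    and Pr :: "'w measure"
    and U U' :: "nat \<Rightarrow> 'w \<Rightarrow> real^'d"
    and \<epsilon> :: real
  defines "\<beta> \<equiv> 1 / M"
  defines "mu_star \<equiv> density lborel (\<lambda>x. ennreal (p_star x))"
  assumes alpha: "0 < \<alpha>" "\<alpha> < 1"
    and p_holder: "p_star \<in> holder_space 1 \<alpha>"
    and p_pos: "\<forall>x\<in>ucube. p_star x > 0"
    and p_zero: "\<forall>x. x \<notin> ucube \<longrightarrow> p_star x = 0"
    and mu_prob: "prob_space mu_star"
    and phi_holder: "phi_star \<in> holder_space 3 \<alpha>"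
    and brenier_convex: "convex_on ucube phi_star"
    and brenier_push: "mu_star = pushfwd (grad phi_star)"
    and M_gt: "1 < M"
    and hess_star: "hess_between (1 / M) M phi_star"
    and net: "\<forall>e>0. is_recu_net (arch e) (phi_eps e)"
    and net_hess: "\<forall>e>0. hess_between (1 / (2 * M)) (2 * M) (phi_eps e)"
    and net_js: "\<forall>e>0. JS_div mu_star (pushfwd (grad (phi_eps e))) \<le> e"
    and Htilde: "\<forall>e>0. holder_norm 2 1 (phi_eps e) \<le> ereal (Htilde e)"
    and m_mono: "mono m"
    and m_lim: "filterlim m at_top sequentially"
    and Pr: "prob_space Pr"
    and indep: "prob_space.indep_vars Pr (\<lambda>_. borel)
                  (\<lambda>k. case k of Inl j \<Rightarrow> U j | Inr j \<Rightarrow> U' j) ({1..} <+> {1..})"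
    and unifU: "\<forall>j\<ge>1. distr Pr borel (U j) = uniform_measure lborel ucube"
    and unifU': "\<forall>j\<ge>1. distr Pr borel (U' j) = uniform_measure lborel ucube"
    and eps: "0 < \<epsilon>"
  shows "AE \<omega> in Pr.
           (\<lambda>n. SUP \<phi>\<in>Hpot (arch \<epsilon>) (Htilde \<epsilon>).
                   ereal \<bar>emp_penalty \<beta> m U U' n \<omega> \<phi> - penalty \<beta> \<phi>\<bar>) \<longlonglongrightarrow> 0"
proof -
  interpret P: prob_space Pr by (rule Pr)
  define K where "K = (Hpot (arch \<epsilon>) (Htilde \<epsilon>) :: (real^'d \<Rightarrow> real) set)"
  define H where "H = Htilde \<epsilon>"
  have Kh: "holder_norm 2 1 \<phi> \<le> ereal H" if "\<phi> \<in> K" for \<phi> :: "real^'d \<Rightarrow> real"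
    using that by (simp add: K_def H_def Hpot_def)
  have Kc: "continuous_on ucube \<phi>" if "\<phi> \<in> K" for \<phi> :: "real^'d \<Rightarrow> real"
    by (rule holder_extract(1)[OF Kh[OF that]])
  have Kb: "\<bar>\<phi> x\<bar> \<le> H" if "\<phi> \<in> K" "x \<in> ucube" for \<phi> :: "real^'d \<Rightarrow> real" and x
    by (rule holder_extract(2)[OF Kh[OF that(1)] that(2)])
  have Kl: "\<bar>\<phi> x - \<phi> y\<bar> \<le> real CARD('d) * H * norm (x - y)"
    if "\<phi> \<in> K" "x \<in> ucube" "y \<in> ucube" for \<phi> :: "real^'d \<Rightarrow> real" and x y
    by (rule lipschitz_cube[OF Kc[OF that(1)] holder_extract(3)[OF Kh[OF that(1)]]
          holder_extract(4)[OF Kh[OF that(1)]] that(2,3)])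
  have eK: "phi_eps \<epsilon> \<in> K"
    using net eps Htilde by (simp add: K_def Hpot_def)
  have "\<forall>k::nat. \<exists>F. finite F \<and> F \<subseteq> K \<and> (\<forall>\<phi>\<in>K. \<exists>\<psi>\<in>F. \<forall>x\<in>ucube. \<bar>\<phi> x - \<psi> x\<bar> \<le> 1 / real (Suc k))"
  proof
    fix k :: nat
    show "\<exists>F. finite F \<and> F \<subseteq> K \<and> (\<forall>\<phi>\<in>K. \<exists>\<psi>\<in>F. \<forall>x\<in>ucube. \<bar>\<phi> x - \<psi> x\<bar> \<le> 1 / real (Suc k))"
      by (rule finite_net[where H=H and L="real CARD('d) * H"]) (use Kb Kl in auto)
  qed
  then obtain F where F: "\<And>k. finite (F k)" "\<And>k. F k \<subseteq> K"
    "\<And>k \<phi>. \<phi> \<in> K \<Longrightarrow> \<exists>\<psi>\<in>F k. \<forall>x\<in>ucube. \<bar>\<phi> x - \<psi> x\<bar> \<le> 1 / real (Suc k)"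
    by metis
  define C where "C = (\<Union>k. F k)"
  have CK: "C \<subseteq> K" using F(2) by (auto simp: C_def)
  have Ccount: "countable C" unfolding C_def by (rule countable_UN) (simp_all add: countable_finite F(1))
  have AE1: "AE \<omega> in Pr. \<forall>\<psi>\<in>C. (\<lambda>n. (\<Sum>j\<in>{1..n}. gfun \<beta> \<psi> (U j \<omega>, U' j \<omega>)) / real n) \<longlonglongrightarrow> penalty \<beta> \<psi>"
  proof (rule AE_ball_countable'[OF _ Ccount])
    fix \<psi> assume "\<psi> \<in> C"
    then have \<psi>: "\<psi> \<in> K" using CK by auto
    show "AE \<omega> in Pr. (\<lambda>n. (\<Sum>j\<in>{1..n}. gfun \<beta> \<psi> (U j \<omega>, U' j \<omega>)) / real n) \<longlonglongrightarrow> penalty \<beta> \<psi>"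
      by (rule per_phi[OF Pr indep unifU unifU' Kc[OF \<psi>] Kb[OF \<psi>]])
  qed
  have rvZ: "(case k of Inl j \<Rightarrow> U j | Inr j \<Rightarrow> U' j) \<in> borel_measurable Pr" if "k \<in> {1..} <+> {1..}" for k
    using indep that unfolding P.indep_vars_def by auto
  have AEU: "AE \<omega> in Pr. V \<omega> \<in> ucube"
    if mV: "V \<in> borel_measurable Pr" and dV: "distr Pr borel V = uniform_measure lborel ucube" for V :: "'w \<Rightarrow> real^'d"
  proof -
    have "AE x in distr Pr borel V. x \<in> ucube"
      unfolding dV by (rule AE_uniform_measureI) auto
    then show ?thesis by (subst (asm) AE_distr_iff[OF mV]) auto
  qed
  have AE2: "AE \<omega> in Pr. \<forall>j. 1 \<le> j \<longrightarrow> U j \<omega> \<in> ucube \<and> U' j \<omega> \<in> ucube"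
    unfolding AE_all_countable
  proof
    fix j :: nat
    show "AE \<omega> in Pr. 1 \<le> j \<longrightarrow> U j \<omega> \<in> ucube \<and> U' j \<omega> \<in> ucube"
    proof (cases "1 \<le> j")
      case True
      have m1: "U j \<in> borel_measurable Pr" using rvZ[of "Inl j"] True InlI[of j "{1..}::nat set" "{1..}::nat set"] by simp
      have m2: "U' j \<in> borel_measurable Pr" using rvZ[of "Inr j"] True InrI[of j "{1..}::nat set" "{1..}::nat set"] by simp
      have "AE \<omega> in Pr. U j \<omega> \<in> ucube" by (rule AEU[OF m1]) (use unifU True in auto)
      moreover have "AE \<omega> in Pr. U' j \<omega> \<in> ucube" by (rule AEU[OF m2]) (use unifU' True in auto)
      ultimately show ?thesis by eventually_elim auto
    qed simp
  qed
  show ?thesis using AE1 AE2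
  proof eventually_elim
    case (elim \<omega>)
    note conv = elim(1)[rule_format] and inU = elim(2)[rule_format]
    define S where "S n = (SUP \<phi>\<in>K. ereal \<bar>emp_penalty \<beta> m U U' n \<omega> \<phi> - penalty \<beta> \<phi>\<bar>)" for n
    have empC: "(\<lambda>n. emp_penalty \<beta> m U U' n \<omega> \<psi>) \<longlonglongrightarrow> penalty \<beta> \<psi>" if "\<psi> \<in> C" for \<psi>
    proof -
      have "(\<lambda>n. (\<Sum>j\<in>{1..m n}. gfun \<beta> \<psi> (U j \<omega>, U' j \<omega>)) / real (m n)) \<longlonglongrightarrow> penalty \<beta> \<psi>"
        by (rule filterlim_compose[OF conv[OF that] m_lim])
      moreover have "(\<Sum>j\<in>{1..m n}. gfun \<beta> \<psi> (U j \<omega>, U' j \<omega>)) / real (m n) = emp_penalty \<beta> m U U' n \<omega> \<psi>" for n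
      proof -
        have "(\<Sum>j\<in>{1..m n}. gfun \<beta> \<psi> (U j \<omega>, U' j \<omega>)) = (\<Sum>j\<in>{1..m n}. penalty_integrand \<beta> \<psi> (U j \<omega>) (U' j \<omega>))"
          by (rule sum.cong) (auto simp: gfun_eq inU)
        then show ?thesis by (simp add: emp_penalty_def)
      qed
      ultimately show ?thesis by simp
    qed
    show ?case unfolding K_def[symmetric]
    proof (rule ereal_tendsto_0I[of S, unfolded S_def])
      fix n
      have "0 \<le> ereal \<bar>emp_penalty \<beta> m U U' n \<omega> (phi_eps \<epsilon>) - penalty \<beta> (phi_eps \<epsilon>)\<bar>" by simp
      also have "\<dots> \<le> (SUP \<phi>\<in>K. ereal \<bar>emp_penalty \<beta> m U U' n \<omega> \<phi> - penalty \<beta> \<phi>\<bar>)"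
        by (rule SUP_upper[OF eK])
      finally show "0 \<le> (SUP \<phi>\<in>K. ereal \<bar>emp_penalty \<beta> m U U' n \<omega> \<phi> - penalty \<beta> \<phi>\<bar>)" .
    next
      fix e :: real assume e: "e > 0"
      obtain k :: nat where k: "1 / real (Suc k) < e / 8" using nat_approx_posE[of "e/8"] e by auto
      define \<delta> where "\<delta> = 1 / real (Suc k)"
      have \<delta>0: "0 \<le> \<delta>" by (simp add: \<delta>_def)
      have "\<forall>\<psi>\<in>F k. eventually (\<lambda>n. dist (emp_penalty \<beta> m U U' n \<omega> \<psi>) (penalty \<beta> \<psi>) < e / 2) sequentially"
      proof
        fix \<psi> assume "\<psi> \<in> F k"
        then have "\<psi> \<in> C" by (auto simp: C_def)
        then show "eventually (\<lambda>n. dist (emp_penalty \<beta> m U U' n \<omega> \<psi>) (penalty \<beta> \<psi>) < e / 2) sequentially"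
          using tendstoD[OF empC[OF \<open>\<psi> \<in> C\<close>], of "e/2"] e by simp
      qed
      then have "eventually (\<lambda>n. \<forall>\<psi>\<in>F k. dist (emp_penalty \<beta> m U U' n \<omega> \<psi>) (penalty \<beta> \<psi>) < e / 2) sequentially"
        by (rule eventually_ball_finite[OF F(1)])
      then show "eventually (\<lambda>n. (SUP \<phi>\<in>K. ereal \<bar>emp_penalty \<beta> m U U' n \<omega> \<phi> - penalty \<beta> \<phi>\<bar>) \<le> ereal e) sequentially"
      proof eventually_elim
        case (elim n)
        show ?case
        proof (rule SUP_least)
          fix \<phi> assume \<phi>: "\<phi> \<in> K"
          obtain \<psi> where \<psi>: "\<psi> \<in> F k" and d: "\<And>x. x \<in> ucube \<Longrightarrow> \<bar>\<phi> x - \<psi> x\<bar> \<le> \<delta>"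
            using F(3)[OF \<phi>, of k] by (auto simp: \<delta>_def)
          have \<psi>K: "\<psi> \<in> K" using \<psi> F(2) by auto
          have a: "\<bar>emp_penalty \<beta> m U U' n \<omega> \<psi> - penalty \<beta> \<psi>\<bar> < e / 2"
            using elim \<psi> by (simp add: dist_real_def)
          have b: "\<bar>emp_penalty \<beta> m U U' n \<omega> \<phi> - emp_penalty \<beta> m U U' n \<omega> \<psi>\<bar> \<le> 2 * \<delta>"
            unfolding emp_penalty_def
            by (rule emp_lip[OF _ d \<delta>0]) (auto simp: inU)
          have c: "\<bar>penalty \<beta> \<phi> - penalty \<beta> \<psi>\<bar> \<le> 2 * \<delta>"
            by (rule pen_lip2[OF Kc[OF \<phi>] Kc[OF \<psi>K] Kb[OF \<phi>] Kb[OF \<psi>K] d])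
          have "\<bar>emp_penalty \<beta> m U U' n \<omega> \<phi> - penalty \<beta> \<phi>\<bar> \<le> e"
            by (rule final_arith[OF a b c]) (use k in \<open>simp add: \<delta>_def\<close>)
          then show "ereal \<bar>emp_penalty \<beta> m U U' n \<omega> \<phi> - penalty \<beta> \<phi>\<bar> \<le> ereal e" by simp
        qed
      qed
    qed
  qed
qed

end
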